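(* Let $(L,d)$ be a metric locale without isolated points and let $a\in L$ with $a<1$ and $a^*=0$. Then there exist subsets $B_n\subseteq L$ for $n\in\mathbb{N}=\{1,2,\dots\}$ and, for each $n$ and each $b\in B_n$, elements $g_b,h_b\in L$ with $0\ne g_b\le b$, $0\ne h_b\le b$ and $g_b\wedge h_b=0$, such that for every $n\in\mathbb{N}$: (1$_n$) $d(b)\le \frac{2}{n}$ for every $b\in B_n$; (2$_n$) for every $x\in L$ with $d(x)\le\frac1n$, there is at most one $b\in B_n$ with $x\wedge b\ne0$; (3$_n$) for every $m<n$, every $b\in B_n$ and every $b'\in B_m$, $g_{b'}\wedge b=0=h_{b'}\wedge b$; (4$_n$) $B_n$ is maximal (with respect to inclusion) among subsets $B\subseteq L$ satisfying the conditions (1$_n$)–(3$_n$) with $B$ in place of $B_n$; (5$_n$) for every $b\in B_n$, $a\vee g_b^*=1=a\vee h_b^*$.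
   Context: A frame (locale) $L$ is a complete lattice in which finite meets distribute over arbitrary joins; $a^*$ denotes the pseudocomplement of $a$. A diameter on $L$ is a map $d\colon L\to[0,+\infty]$ with (D1) $d(0)=0$; (D2) $a\le b\Rightarrow d(a)\le d(b)$; (D3) $a\wedge b\neq 0\Rightarrow d(a\vee b)\le d(a)+d(b)$; (D4) for every $\varepsilon>0$, $\bigvee\{a\in L\mid d(a)<\varepsilon\}=1$. Write $b\lhd_\varepsilon a$ if for every $c\in L$ with $d(c)<\varepsilon$, $c\wedge b\ne0$ implies $c\le a$. The diameter is admissible if $a=\bigvee\{b\in L\mid b\lhd_\varepsilon a \text{ for some }\varepsilon>0\}$ for all $a\in L$; a metric locale is a pair $(L,d)$ with $d$ an admissible diameter. A sublocale of $L$ is a subset closed under arbitrary meets such that $x\to s$ lies in it whenever $s$ does ($\to$ the Heyting implication); the open sublocale of $x$ is $\mathfrak{o}(x)=\{x\to y\mid y\in L\}$. A point of $L$ is $p\ne1$ such that $x\wedge y\le p$ implies $x\le p$ or $y\le p$; it is isolated if the sublocale $\{1,p\}$ equals $\mathfrak{o}(x)$ for some $x\in L$. *)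

theory Defs
  imports Complex_Main "HOL-Library.Extended_Nonnegative_Real"
begin

definition frame :: "'a::complete_lattice itself \<Rightarrow> bool" where
  "frame _ \<longleftrightarrow> (\<forall>(a::'a) S. inf a (Sup S) = Sup ((\<lambda>s. inf a s) ` S))"

definition pseudocompl :: "'a::complete_lattice \<Rightarrow> 'a" where
  "pseudocompl a = Sup {x. inf x a = bot}"

definition himp :: "'a::complete_lattice \<Rightarrow> 'a \<Rightarrow> 'a" where
  "himp x y = Sup {z. inf z x \<le> y}"

definition diameter :: "('a::complete_lattice \<Rightarrow> ennreal) \<Rightarrow> bool" where
  "diameter d \<longleftrightarrow>
     d bot = 0 \<and>
     (\<forall>a b. a \<le> b \<longrightarrow> d a \<le> d b) \<and>
     (\<forall>a b. inf a b \<noteq> bot \<longrightarrow> d (sup a b) \<le> d a + d b) \<and>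
     (\<forall>\<epsilon>::real. \<epsilon> > 0 \<longrightarrow> Sup {a. d a < ennreal \<epsilon>} = top)"

definition uniformly_below :: "('a::complete_lattice \<Rightarrow> ennreal) \<Rightarrow> real \<Rightarrow> 'a \<Rightarrow> 'a \<Rightarrow> bool" where
  "uniformly_below d \<epsilon> b a \<longleftrightarrow>
     (\<forall>c. d c < ennreal \<epsilon> \<longrightarrow> inf c b \<noteq> bot \<longrightarrow> c \<le> a)"

definition admissible :: "('a::complete_lattice \<Rightarrow> ennreal) \<Rightarrow> bool" where
  "admissible d \<longleftrightarrow>
     (\<forall>a. a = Sup {b. \<exists>\<epsilon>::real. \<epsilon> > 0 \<and> uniformly_below d \<epsilon> b a})"

definition metric_locale :: "('a::complete_lattice \<Rightarrow> ennreal) \<Rightarrow> bool" where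
  "metric_locale d \<longleftrightarrow> frame TYPE('a) \<and> diameter d \<and> admissible d"

definition sublocale_of :: "'a::complete_lattice set \<Rightarrow> bool" where
  "sublocale_of S \<longleftrightarrow> (\<forall>T. T \<subseteq> S \<longrightarrow> Inf T \<in> S) \<and> (\<forall>x s. s \<in> S \<longrightarrow> himp x s \<in> S)"

definition open_sublocale :: "'a::complete_lattice \<Rightarrow> 'a set" where
  "open_sublocale x = {himp x y | y. True}"

definition is_point :: "'a::complete_lattice \<Rightarrow> bool" where
  "is_point p \<longleftrightarrow> p \<noteq> top \<and> (\<forall>x y. inf x y \<le> p \<longrightarrow> x \<le> p \<or> y \<le> p)"

definition isolated_point :: "'a::complete_lattice \<Rightarrow> bool" where
  "isolated_point p \<longleftrightarrow> is_point p \<and> (\<exists>x. {top, p} = open_sublocale x)"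

definition no_isolated_points :: "'a::complete_lattice itself \<Rightarrow> bool" where
  "no_isolated_points _ \<longleftrightarrow> (\<forall>p::'a. \<not> isolated_point p)"

end

theory Submission
  imports Defs
begin

lemma frame_inf_Sup: "frame TYPE('a::complete_lattice) \<Longrightarrow> inf (x::'a) (Sup S) = Sup ((\<lambda>s. inf x s) ` S)"
  unfolding frame_def by blast

lemma frame_distrib: "frame TYPE('a::complete_lattice) \<Longrightarrow> inf (x::'a) (sup y z) = sup (inf x y) (inf x z)"
proof -
  assume f: "frame TYPE('a)"
  have "inf x (sup y z) = inf x (Sup {y, z})" by simp
  also have "\<dots> = Sup ((\<lambda>s. inf x s) ` {y, z})" using frame_inf_Sup[OF f] by blast
  also have "\<dots> = sup (inf x y) (inf x z)" by simp
  finally show ?thesis .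
qed

lemma pc_upper: "inf y x = bot \<Longrightarrow> y \<le> pseudocompl (x::'a::complete_lattice)"
  unfolding pseudocompl_def by (rule Sup_upper) simp

lemma pc_inf: "frame TYPE('a::complete_lattice) \<Longrightarrow> inf (x::'a) (pseudocompl x) = bot"
proof -
  assume f: "frame TYPE('a)"
  have "inf x (pseudocompl x) = Sup ((\<lambda>s. inf x s) ` {z. inf z x = bot})"
    unfolding pseudocompl_def using frame_inf_Sup[OF f] by blast
  also have "\<dots> = bot" by (auto simp: inf_commute intro!: Sup_eqI)
  finally show ?thesis .
qed

lemma pc_anti: "(g::'a::complete_lattice) \<le> e \<Longrightarrow> pseudocompl e \<le> pseudocompl g"
  unfolding pseudocompl_def
proof (rule Sup_subset_mono, safe)
  fix x assume "g \<le> e" "inf x e = bot"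
  have "inf x g \<le> inf x e" using \<open>g \<le> e\<close> by (rule inf_mono[OF order_refl])
  then show "inf x g = bot" using \<open>inf x e = bot\<close> by (metis le_bot)
qed

lemma ub_rb:
  assumes "diameter d" "\<epsilon> > 0" "uniformly_below d \<epsilon> k f"
  shows "sup (pseudocompl k) f = top"
proof -
  have "Sup {a. d a < ennreal \<epsilon>} = top" using assms(1,2) unfolding diameter_def by blast
  moreover have "Sup {a. d a < ennreal \<epsilon>} \<le> sup (pseudocompl k) f"
  proof (rule Sup_least)
    fix x assume "x \<in> {a. d a < ennreal \<epsilon>}"
    then have dx: "d x < ennreal \<epsilon>" by simp
    show "x \<le> sup (pseudocompl k) f"
    proof (cases "inf x k = bot")
      case True then show ?thesis using pc_upper[OF True] by (meson le_supI1)
    next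
      case False then have "x \<le> f" using assms(3) dx unfolding uniformly_below_def by blast
      then show ?thesis by (meson le_supI2)
    qed
  qed
  ultimately show ?thesis by (simp add: top_le)
qed

lemma adm_exists:
  fixes d :: "'a::complete_lattice \<Rightarrow> ennreal" and f :: 'a
  assumes "admissible d" "f \<noteq> bot"
  shows "\<exists>k \<epsilon>. k \<noteq> bot \<and> \<epsilon> > 0 \<and> uniformly_below d \<epsilon> k f"
proof (rule ccontr)
  assume "\<not> ?thesis"
  then have "{b. \<exists>\<epsilon>::real. \<epsilon> > 0 \<and> uniformly_below d \<epsilon> b f} \<subseteq> {bot}" by blast
  then have "Sup {b. \<exists>\<epsilon>::real. \<epsilon> > 0 \<and> uniformly_below d \<epsilon> b f} = bot"
    by (auto simp: Sup_bot_conv)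
  moreover have "f = Sup {b. \<exists>\<epsilon>::real. \<epsilon> > 0 \<and> uniformly_below d \<epsilon> b f}"
    using assms(1) unfolding admissible_def by blast
  ultimately show False using assms(2) by simp
qed

lemma rb_exists:
  fixes d :: "'a::complete_lattice \<Rightarrow> ennreal" and f :: 'a
  assumes "metric_locale d" "f \<noteq> bot"
  shows "\<exists>k. k \<noteq> bot \<and> k \<le> f \<and> sup (pseudocompl k) f = top"
proof -
  have fr: "frame TYPE('a)" and dm: "diameter d" and ad: "admissible d"
    using assms(1) unfolding metric_locale_def by auto
  obtain k \<epsilon> where k: "k \<noteq> bot" "\<epsilon> > 0" "uniformly_below d \<epsilon> k f"
    using adm_exists[OF ad assms(2)] by blast
  have t: "sup (pseudocompl k) f = top" using ub_rb[OF dm k(2,3)] .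
  have "k = inf k (sup (pseudocompl k) f)" using t by simp
  also have "\<dots> = sup (inf k (pseudocompl k)) (inf k f)" using frame_distrib[OF fr] by blast
  also have "\<dots> = inf k f" using pc_inf[OF fr] by simp
  finally have "k \<le> f" by (metis inf.cobounded2)
  with k t show ?thesis by blast
qed

lemma atom_isolated:
  assumes fr: "frame TYPE('a::complete_lattice)" and e: "(e::'a) \<noteq> bot"
    and at: "\<forall>f. f \<le> e \<longrightarrow> f = bot \<or> f = e"
  shows "isolated_point (pseudocompl e)"
proof -
  have ee: "inf e (pseudocompl e) = bot" using pc_inf[OF fr] .
  have ntop: "pseudocompl e \<noteq> top" using ee e by auto
  have prime: "\<forall>x y. inf x y \<le> pseudocompl e \<longrightarrow> x \<le> pseudocompl e \<or> y \<le> pseudocompl e"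
  proof (intro allI impI)
    fix x y assume xy: "inf x y \<le> pseudocompl e"
    show "x \<le> pseudocompl e \<or> y \<le> pseudocompl e"
    proof (rule ccontr)
      assume "\<not> ?thesis"
      then have nx': "\<not> x \<le> pseudocompl e" and ny': "\<not> y \<le> pseudocompl e" by simp_all
      have nx: "inf x e \<noteq> bot" using nx' pc_upper[of x e] by auto
      have ny: "inf y e \<noteq> bot" using ny' pc_upper[of y e] by auto
      have "inf e x \<le> e" by (rule inf.cobounded1)
      moreover have "inf e x \<noteq> bot" using nx by (simp add: inf.commute)
      ultimately have "inf e x = e" using at by blast
      then have ex: "e \<le> x" by (metis inf.cobounded2)
      have "inf e y \<le> e" by (rule inf.cobounded1)
      moreover have "inf e y \<noteq> bot" using ny by (simp add: inf.commute)
      ultimately have "inf e y = e" using at by blast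
      then have ey: "e \<le> y" by (metis inf.cobounded2)
      have "e \<le> inf x y" using ex ey by (rule le_infI)
      then have "e \<le> pseudocompl e" using xy by (rule order_trans)
      then have "inf e (pseudocompl e) = e" by (rule inf.absorb1)
      then have "e = bot" using ee by simp
      with e show False by simp
    qed
  qed
  have "{top, pseudocompl e} = open_sublocale e"
  proof -
    have h1: "himp e y = top" if "e \<le> y" for y
    proof -
      have "{z. inf z e \<le> y} = UNIV" using that by (auto intro: le_infI2)
      then show ?thesis unfolding himp_def by simp
    qed
    have h2: "himp e y = pseudocompl e" if "\<not> e \<le> y" for y
    proof -
      have "inf e y \<noteq> e"
      proof
        assume "inf e y = e"
        then have "e \<le> y" using inf.cobounded2[of e y] by simp
        with that show False by simp
      qed
      then have ey0: "inf e y = bot" using at inf.cobounded1[of e y] by blast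
      have "{z. inf z e \<le> y} = {z. inf z e = bot}"
      proof (intro Collect_cong iffI)
        fix z assume zy: "inf z e \<le> y"
        have "inf z e \<le> inf e y" by (rule le_infI[OF inf.cobounded2 zy])
        then have "inf z e \<le> bot" unfolding ey0 .
        then show "inf z e = bot" by (rule le_bot)
      qed simp
      then show ?thesis unfolding himp_def pseudocompl_def by simp
    qed
    have "\<not> e \<le> bot" using e le_bot by blast
    then have "himp e bot = pseudocompl e" by (rule h2)
    moreover have "himp e top = top" using h1 by simp
    ultimately show ?thesis unfolding open_sublocale_def using h1 h2
    proof (intro set_eqI iffI)
      fix z assume "z \<in> {top, pseudocompl e}"
      then have "z = himp e top \<or> z = himp e bot"
        using \<open>himp e bot = pseudocompl e\<close> \<open>himp e top = top\<close> by auto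
      then show "z \<in> {himp e y |y. True}" by blast
    next
      fix z assume "z \<in> {himp e y |y. True}"
      then obtain y where "z = himp e y" by blast
      then show "z \<in> {top, pseudocompl e}" using h1 h2 by (cases "e \<le> y") auto
    qed
  qed
  then show ?thesis unfolding isolated_point_def is_point_def using ntop prime by blast
qed

lemma key:
  fixes d :: "'a::complete_lattice \<Rightarrow> ennreal"
  assumes ml: "metric_locale d" and ni: "no_isolated_points TYPE('a::complete_lattice)"
    and apc: "pseudocompl a = bot" and b: "(b::'a) \<noteq> bot"
  shows "\<exists>g h. g \<noteq> bot \<and> g \<le> b \<and> h \<noteq> bot \<and> h \<le> b \<and> inf g h = bot \<and>
     sup a (pseudocompl g) = top \<and> sup a (pseudocompl h) = top"
proof -
  have fr: "frame TYPE('a)" using ml unfolding metric_locale_def by auto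
  have c: "inf b a \<noteq> bot"
  proof
    assume "inf b a = bot"
    then have "b \<le> pseudocompl a" by (rule pc_upper)
    then show False using apc b by (simp add: bot_unique)
  qed
  obtain e where e: "e \<noteq> bot" "e \<le> inf b a" "sup (pseudocompl e) (inf b a) = top"
    using rb_exists[OF ml c] by blast
  have "\<not> (\<forall>f. f \<le> e \<longrightarrow> f = bot \<or> f = e)"
    using atom_isolated[OF fr e(1)] ni unfolding no_isolated_points_def by blast
  then obtain f where f: "f \<le> e" "f \<noteq> bot" "f \<noteq> e" by blast
  obtain k where k: "k \<noteq> bot" "k \<le> f" "sup (pseudocompl k) f = top"
    using rb_exists[OF ml f(2)] by blast
  have hne: "inf (pseudocompl k) e \<noteq> bot"
  proof
    assume z: "inf (pseudocompl k) e = bot"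
    have "e = inf e (sup (pseudocompl k) f)" using k(3) by simp
    also have "\<dots> = sup (inf e (pseudocompl k)) (inf e f)" using frame_distrib[OF fr] by blast
    also have "\<dots> = inf e f" using z by (simp add: inf.commute)
    also have "\<dots> = f" using f(1) by (rule inf.absorb2)
    finally show False using f(3) by simp
  qed
  have disj: "inf k (inf (pseudocompl k) e) = bot"
  proof -
    have "inf k (inf (pseudocompl k) e) = inf (inf k (pseudocompl k)) e" by (rule inf_assoc[symmetric])
    then show ?thesis using pc_inf[OF fr, of k] by simp
  qed
  have gen: "sup a (pseudocompl g) = top" if "g \<le> e" for g
  proof -
    have "top = sup (pseudocompl e) (inf b a)" using e(3) by simp
    also have "\<dots> \<le> sup a (pseudocompl g)"
    proof (rule le_supI)
      show "pseudocompl e \<le> sup a (pseudocompl g)" using pc_anti[OF that] by (rule le_supI2)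
      show "inf b a \<le> sup a (pseudocompl g)" by (rule le_supI1) (rule inf.cobounded2)
    qed
    finally show ?thesis by (simp add: top_le)
  qed
  have eb: "e \<le> b" using e(2) by simp
  have ke: "k \<le> e" using k(2) f(1) by (rule order_trans)
  have he: "inf (pseudocompl k) e \<le> e" by (rule inf.cobounded2)
  have kb: "k \<le> b" using ke eb by (rule order_trans)
  have hb: "inf (pseudocompl k) e \<le> b" using he eb by (rule order_trans)
  show ?thesis
    by (intro exI[of _ k] exI[of _ "inf (pseudocompl k) e"] conjI k(1) kb hne hb disj gen ke he)
qed


definition Pc :: "('a::complete_lattice \<Rightarrow> ennreal) \<Rightarrow> ('a \<Rightarrow> 'a) \<Rightarrow> ('a \<Rightarrow> 'a) \<Rightarrow> nat \<Rightarrow> (nat \<Rightarrow> 'a set) \<Rightarrow> 'a set \<Rightarrow> bool" where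
  "Pc d g h n Bm C \<longleftrightarrow> bot \<notin> C \<and>
           (\<forall>b\<in>C. d b \<le> ennreal (2 / real n)) \<and>
           (\<forall>x. d x \<le> ennreal (1 / real n) \<longrightarrow>
              (\<forall>b\<in>C. \<forall>b'\<in>C. inf x b \<noteq> bot \<longrightarrow> inf x b' \<noteq> bot \<longrightarrow> b = b')) \<and>
           (\<forall>m. 1 \<le> m \<longrightarrow> m < n \<longrightarrow> (\<forall>b\<in>C. \<forall>b'\<in>Bm m.
              inf (g b') b = bot \<and> inf (h b') b = bot))"

definition Mx :: "('a::complete_lattice \<Rightarrow> ennreal) \<Rightarrow> ('a \<Rightarrow> 'a) \<Rightarrow> ('a \<Rightarrow> 'a) \<Rightarrow> nat \<Rightarrow> (nat \<Rightarrow> 'a set) \<Rightarrow> 'a set" where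
  "Mx d g h n Bm = (SOME M. Pc d g h n Bm M \<and> (\<forall>X. Pc d g h n Bm X \<longrightarrow> M \<subseteq> X \<longrightarrow> X = M))"

primrec Fs :: "('a::complete_lattice \<Rightarrow> ennreal) \<Rightarrow> ('a \<Rightarrow> 'a) \<Rightarrow> ('a \<Rightarrow> 'a) \<Rightarrow> nat \<Rightarrow> nat \<Rightarrow> 'a set" where
  "Fs d g h 0 = (\<lambda>_. {})"
| "Fs d g h (Suc n) = (Fs d g h n)(Suc n := Mx d g h (Suc n) (Fs d g h n))"

lemma Mx_spec: "Pc d g h n Bm (Mx d g h n Bm) \<and>
   (\<forall>X. Pc d g h n Bm X \<longrightarrow> Mx d g h n Bm \<subseteq> X \<longrightarrow> X = Mx d g h n Bm)"
proof -
  have "\<exists>M\<in>{C. Pc d g h n Bm C}. \<forall>X\<in>{C. Pc d g h n Bm C}. M \<subseteq> X \<longrightarrow> X = M"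
  proof (rule Zorn_Lemma, rule ballI)
    fix CC assume "CC \<in> chains {C. Pc d g h n Bm C}"
    then have sub: "\<And>X. X \<in> CC \<Longrightarrow> Pc d g h n Bm X"
      and ch: "\<And>X Y. X \<in> CC \<Longrightarrow> Y \<in> CC \<Longrightarrow> X \<subseteq> Y \<or> Y \<subseteq> X"
      unfolding chains_def chain_subset_def by auto
    have "Pc d g h n Bm (\<Union>CC)"
      unfolding Pc_def
    proof (intro conjI allI impI ballI)
      show "bot \<notin> \<Union>CC" using sub unfolding Pc_def by blast
    next
      fix b assume "b \<in> \<Union>CC" then show "d b \<le> ennreal (2 / real n)" using sub unfolding Pc_def by blast
    next
      fix x b b' assume x: "d x \<le> ennreal (1 / real n)" and b: "b \<in> \<Union>CC" and b': "b' \<in> \<Union>CC"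
        and "inf x b \<noteq> bot" "inf x b' \<noteq> bot"
      obtain X Y where XY: "X \<in> CC" "Y \<in> CC" "b \<in> X" "b' \<in> Y" using b b' by blast
      show "b = b'"
      proof (cases "X \<subseteq> Y")
        case True
        then show ?thesis using sub[OF XY(2)] XY x \<open>inf x b \<noteq> bot\<close> \<open>inf x b' \<noteq> bot\<close>
          unfolding Pc_def by blast
      next
        case False
        then have "Y \<subseteq> X" using ch[OF XY(1,2)] by blast
        then show ?thesis using sub[OF XY(1)] XY x \<open>inf x b \<noteq> bot\<close> \<open>inf x b' \<noteq> bot\<close>
          unfolding Pc_def by blast
      qed
    next
      fix m b b' assume "1 \<le> m" "m < n" "b \<in> \<Union>CC" "b' \<in> Bm m"
      then show "inf (g b') b = bot" "inf (h b') b = bot" using sub unfolding Pc_def by blast+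
    qed
    then show "\<Union>CC \<in> {C. Pc d g h n Bm C}" by simp
  qed
  then obtain M where "Pc d g h n Bm M \<and> (\<forall>X. Pc d g h n Bm X \<longrightarrow> M \<subseteq> X \<longrightarrow> X = M)" by auto
  then show ?thesis unfolding Mx_def by (rule someI)
qed

lemma Pc_cong: "(\<And>m. m < n \<Longrightarrow> Bm m = Bm' m) \<Longrightarrow> Pc d g h n Bm C = Pc d g h n Bm' C"
  unfolding Pc_def by (intro arg_cong2[where f = "(\<and>)"] refl) auto

lemma Fs_stable: "m \<le> n \<Longrightarrow> Fs d g h n m = Fs d g h m m"
proof (induction n)
  case 0 then show ?case by simp
next
  case (Suc n)
  then show ?case by (cases "m = Suc n") auto
qed

lemma Fs_spec:
  assumes "n \<ge> 1"
  shows "Pc d g h n (\<lambda>k. Fs d g h k k) (Fs d g h n n) \<and>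
   (\<forall>X. Pc d g h n (\<lambda>k. Fs d g h k k) X \<longrightarrow> Fs d g h n n \<subseteq> X \<longrightarrow> X = Fs d g h n n)"
proof -
  obtain p where p: "n = Suc p" using assms by (cases n) auto
  have eq: "Fs d g h n n = Mx d g h n (Fs d g h p)" using p by simp
  have cong: "\<And>C. Pc d g h n (Fs d g h p) C = Pc d g h n (\<lambda>k. Fs d g h k k) C"
  proof (rule Pc_cong)
    fix m assume "m < n" then show "Fs d g h p m = Fs d g h m m" using p by (intro Fs_stable) simp
  qed
  show ?thesis using Mx_spec[of d g h n "Fs d g h p"] unfolding eq cong .
qed

theorem proposition5p2:
  fixes d :: "'a::complete_lattice \<Rightarrow> ennreal" and a :: 'a
  assumes "metric_locale d"
    and "no_isolated_points TYPE('a)"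
    and "a < top"
    and "pseudocompl a = bot"
  shows "\<exists>(B :: nat \<Rightarrow> 'a set) (g :: 'a \<Rightarrow> 'a) (h :: 'a \<Rightarrow> 'a).
    (\<forall>n\<ge>1. \<forall>b\<in>B n. g b \<noteq> bot \<and> g b \<le> b \<and> h b \<noteq> bot \<and> h b \<le> b \<and> inf (g b) (h b) = bot) \<and>
    (\<forall>n\<ge>1.
      (\<forall>b\<in>B n. d b \<le> ennreal (2 / real n)) \<and>
      (\<forall>x. d x \<le> ennreal (1 / real n) \<longrightarrow>
           (\<forall>b\<in>B n. \<forall>b'\<in>B n. inf x b \<noteq> bot \<longrightarrow> inf x b' \<noteq> bot \<longrightarrow> b = b')) \<and>
      (\<forall>m. 1 \<le> m \<longrightarrow> m < n \<longrightarrow> (\<forall>b\<in>B n. \<forall>b'\<in>B m.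
           inf (g b') b = bot \<and> inf (h b') b = bot)) \<and>
      (\<forall>C. B n \<subseteq> C \<longrightarrow> bot \<notin> C \<longrightarrow>
           (\<forall>b\<in>C. d b \<le> ennreal (2 / real n)) \<longrightarrow>
           (\<forall>x. d x \<le> ennreal (1 / real n) \<longrightarrow>
              (\<forall>b\<in>C. \<forall>b'\<in>C. inf x b \<noteq> bot \<longrightarrow> inf x b' \<noteq> bot \<longrightarrow> b = b')) \<longrightarrow>
           (\<forall>m. 1 \<le> m \<longrightarrow> m < n \<longrightarrow> (\<forall>b\<in>C. \<forall>b'\<in>B m.
              inf (g b') b = bot \<and> inf (h b') b = bot)) \<longrightarrow>
           C = B n) \<and>
      (\<forall>b\<in>B n. sup a (pseudocompl (g b)) = top \<and> sup a (pseudocompl (h b)) = top))"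
proof -
  have "\<forall>b. \<exists>gh. b \<noteq> bot \<longrightarrow> (fst gh \<noteq> bot \<and> fst gh \<le> b \<and> snd gh \<noteq> bot \<and> snd gh \<le> b \<and> inf (fst gh) (snd gh) = bot \<and>
     sup a (pseudocompl (fst gh)) = top \<and> sup a (pseudocompl (snd gh)) = top)"
    using key[OF assms(1,2,4)] by fastforce
  then obtain GH where GH: "\<And>b. b \<noteq> bot \<Longrightarrow> fst (GH b) \<noteq> bot \<and> fst (GH b) \<le> b \<and> snd (GH b) \<noteq> bot \<and> snd (GH b) \<le> b \<and> inf (fst (GH b)) (snd (GH b)) = bot \<and>
     sup a (pseudocompl (fst (GH b))) = top \<and> sup a (pseudocompl (snd (GH b))) = top"
    by metis
  define G where "G = (\<lambda>b. fst (GH b))"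
  define H where "H = (\<lambda>b. snd (GH b))"
  define B where "B = (\<lambda>k. Fs d G H k k)"
  have GH': "\<And>b. b \<noteq> bot \<Longrightarrow> G b \<noteq> bot \<and> G b \<le> b \<and> H b \<noteq> bot \<and> H b \<le> b \<and> inf (G b) (H b) = bot \<and>
     sup a (pseudocompl (G b)) = top \<and> sup a (pseudocompl (H b)) = top"
    unfolding G_def H_def using GH by blast
  have sp: "\<And>n. n \<ge> 1 \<Longrightarrow> Pc d G H n B (B n) \<and> (\<forall>X. Pc d G H n B X \<longrightarrow> B n \<subseteq> X \<longrightarrow> X = B n)"
    unfolding B_def by (rule Fs_spec)
  have nb: "\<And>n b. n \<ge> 1 \<Longrightarrow> b \<in> B n \<Longrightarrow> b \<noteq> bot"
    using sp unfolding Pc_def by blast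
  have P1: "\<forall>n\<ge>1. \<forall>b\<in>B n. G b \<noteq> bot \<and> G b \<le> b \<and> H b \<noteq> bot \<and> H b \<le> b \<and> inf (G b) (H b) = bot"
  proof (intro allI impI)
    fix n :: nat assume n: "n \<ge> 1"
    show "\<forall>b\<in>B n. G b \<noteq> bot \<and> G b \<le> b \<and> H b \<noteq> bot \<and> H b \<le> b \<and> inf (G b) (H b) = bot"
      using GH' nb[OF n] by blast
  qed
  have P2: "\<forall>n\<ge>1. (\<forall>b\<in>B n. d b \<le> ennreal (2 / real n)) \<and>
      (\<forall>x. d x \<le> ennreal (1 / real n) \<longrightarrow>
           (\<forall>b\<in>B n. \<forall>b'\<in>B n. inf x b \<noteq> bot \<longrightarrow> inf x b' \<noteq> bot \<longrightarrow> b = b')) \<and>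
      (\<forall>m. 1 \<le> m \<longrightarrow> m < n \<longrightarrow> (\<forall>b\<in>B n. \<forall>b'\<in>B m.
           inf (G b') b = bot \<and> inf (H b') b = bot)) \<and>
      (\<forall>C. B n \<subseteq> C \<longrightarrow> bot \<notin> C \<longrightarrow>
           (\<forall>b\<in>C. d b \<le> ennreal (2 / real n)) \<longrightarrow>
           (\<forall>x. d x \<le> ennreal (1 / real n) \<longrightarrow>
              (\<forall>b\<in>C. \<forall>b'\<in>C. inf x b \<noteq> bot \<longrightarrow> inf x b' \<noteq> bot \<longrightarrow> b = b')) \<longrightarrow>
           (\<forall>m. 1 \<le> m \<longrightarrow> m < n \<longrightarrow> (\<forall>b\<in>C. \<forall>b'\<in>B m.
              inf (G b') b = bot \<and> inf (H b') b = bot)) \<longrightarrow>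
           C = B n) \<and>
      (\<forall>b\<in>B n. sup a (pseudocompl (G b)) = top \<and> sup a (pseudocompl (H b)) = top)"
  proof (intro allI impI)
    fix n :: nat assume n: "n \<ge> 1"
    note s = sp[OF n]
    have h0: "\<forall>b\<in>B n. d b \<le> ennreal (2 / real n)" using s unfolding Pc_def by blast
    have h1: "\<forall>x. d x \<le> ennreal (1 / real n) \<longrightarrow>
           (\<forall>b\<in>B n. \<forall>b'\<in>B n. inf x b \<noteq> bot \<longrightarrow> inf x b' \<noteq> bot \<longrightarrow> b = b')"
      using s unfolding Pc_def by blast
    have h2: "\<forall>m. 1 \<le> m \<longrightarrow> m < n \<longrightarrow> (\<forall>b\<in>B n. \<forall>b'\<in>B m.
           inf (G b') b = bot \<and> inf (H b') b = bot)"
      using s unfolding Pc_def by blast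
    have h3: "\<forall>C. B n \<subseteq> C \<longrightarrow> bot \<notin> C \<longrightarrow>
           (\<forall>b\<in>C. d b \<le> ennreal (2 / real n)) \<longrightarrow>
           (\<forall>x. d x \<le> ennreal (1 / real n) \<longrightarrow>
              (\<forall>b\<in>C. \<forall>b'\<in>C. inf x b \<noteq> bot \<longrightarrow> inf x b' \<noteq> bot \<longrightarrow> b = b')) \<longrightarrow>
           (\<forall>m. 1 \<le> m \<longrightarrow> m < n \<longrightarrow> (\<forall>b\<in>C. \<forall>b'\<in>B m.
              inf (G b') b = bot \<and> inf (H b') b = bot)) \<longrightarrow>
           C = B n"
      using s unfolding Pc_def by blast
    have h4: "\<forall>b\<in>B n. sup a (pseudocompl (G b)) = top \<and> sup a (pseudocompl (H b)) = top"
      using GH' nb[OF n] by blast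
    show "(\<forall>b\<in>B n. d b \<le> ennreal (2 / real n)) \<and>
      (\<forall>x. d x \<le> ennreal (1 / real n) \<longrightarrow>
           (\<forall>b\<in>B n. \<forall>b'\<in>B n. inf x b \<noteq> bot \<longrightarrow> inf x b' \<noteq> bot \<longrightarrow> b = b')) \<and>
      (\<forall>m. 1 \<le> m \<longrightarrow> m < n \<longrightarrow> (\<forall>b\<in>B n. \<forall>b'\<in>B m.
           inf (G b') b = bot \<and> inf (H b') b = bot)) \<and>
      (\<forall>C. B n \<subseteq> C \<longrightarrow> bot \<notin> C \<longrightarrow>
           (\<forall>b\<in>C. d b \<le> ennreal (2 / real n)) \<longrightarrow>
           (\<forall>x. d x \<le> ennreal (1 / real n) \<longrightarrow>
              (\<forall>b\<in>C. \<forall>b'\<in>C. inf x b \<noteq> bot \<longrightarrow> inf x b' \<noteq> bot \<longrightarrow> b = b')) \<longrightarrow>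
           (\<forall>m. 1 \<le> m \<longrightarrow> m < n \<longrightarrow> (\<forall>b\<in>C. \<forall>b'\<in>B m.
              inf (G b') b = bot \<and> inf (H b') b = bot)) \<longrightarrow>
           C = B n) \<and>
      (\<forall>b\<in>B n. sup a (pseudocompl (G b)) = top \<and> sup a (pseudocompl (H b)) = top)"
      by (intro conjI h0 h1 h2 h3 h4)
  qed
  show ?thesis
    by (rule exI[of _ B], rule exI[of _ G], rule exI[of _ H]) (rule conjI[OF P1 P2])
qed

end
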